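(* The alternating-minimization initialization algorithm described in the context generates objective values for the representation-aware $k$-means clustering problem that are monotonically non-increasing over the outer iterations $l \geq 2$, and it terminates after a finite number of iterations.
   Context: Data $\mathcal{D}=\{x^t\in\mathbb{R}^D\}_{t=1}^N$ are to be partitioned into $K$ clusters $C_1,\dots,C_K$ with binary assignment variables $z_{tk}$ (each point assigned to exactly one cluster, $\sum_k z_{tk}=1$) and cluster-usage binaries $u_k$, subject to cardinality constraints $N_{\min}u_k\le\sum_t z_{tk}\le N_{\max}u_k$. For each pair of clusters $i<j$, an interpretable separating hyperplane $(w^{ij},b^{ij})$ is found by the integer program: minimize $\sum_{t\in C_i\cup C_j}\xi_t$ subject to $(w^{ij})^Tx^t+b^{ij}\ge-\xi_t$ for $x^t\in C_i$, $(w^{ij})^Tx^t+b^{ij}+\epsilon\le\xi_t$ for $x^t\in C_j$, $\xi_t\ge 0$, with $w^{ij}=w^{ij}_+-w^{ij}_-$ integer, $w^{ij}_\pm\in\mathbb{Z}^D_{\ge0}$, $\sum_d (w^{ij}_{d,+}+w^{ij}_{d,-})\ge1$, binaries $y^{ij}_{d,\pm}$ with $y^{ij}_{d,+}+y^{ij}_{d,-}\le1$, $\sum_d(y^{ij}_{d,+}+y^{ij}_{d,-})\le\beta$, and $0\le w^{ij}_{d,\pm}\le M y^{ij}_{d,\pm}$ (here $M>1$ is the maximum integer coefficient, $\beta$ a sparsity bound, $\epsilon>0$ a fixed separation constant). Given hyperplanes, representation errors for every point are $(\xi^{ij}_+)_t$ (error if $t$ is assigned to cluster $i$) and $(\xi^{ij}_-)_t$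 (error if assigned to cluster $j$). The representation-aware $k$-means problem is: minimize $\sum_{k=1}^K\sum_{t}z_{tk}\|x^t-c_k\|^2+\lambda\sum_t\sum_{i=1}^{K-1}\sum_{j=i+1}^K\big(z_{ti}(\xi^{ij}_+)_t+z_{tj}(\xi^{ij}_-)_t\big)$ over $z$, centers $c_k$, and $u_k$, subject to the assignment and cardinality constraints, with $\lambda\ge0$. The initialization algorithm: set all $\xi=0$; initialize $z,c_k$ by standard $k$-means; then for outer iterations $l=1,2,\dots$: (a) repeatedly fix $c_k$ and solve the representation-aware $k$-means problem for $z$, then set $c_k=\frac{1}{N_k}\sum_t z_{tk}x^t$ with $N_k=\sum_t z_{tk}$, until convergence; (b) set $C_i=\{x^t:z_{ti}=1\}$ and for every pair $i<j$ solve the separating-hyperplane IP for $(w^{ij},b^{ij})$ and update $(\xi^{ij}_+)_t=\max(-(w^{ij})^Tx^t+b^{ij},0)$ and $(\xi^{ij}_-)_t=\max((w^{ij})^Tx^t+b^{ij}+\epsilon,0)$ for all $t$; the algorithm stops when the objective value no longer changes. *)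

theory Defs
  imports "HOL-Analysis.Analysis"
begin

text \<open>Data: points x t (for t < N) in real^'d, i.e. R^D with D = CARD('d).
  Clusters are indexed by k < K (0-based; the paper's 1..K).
  Assignments z t k are reals constrained to {0,1}; representation errors
  are stored as xi i j t (pair of clusters i < j, point t).\<close>

type_synonym assign = "nat \<Rightarrow> nat \<Rightarrow> real"
type_synonym errs = "nat \<Rightarrow> nat \<Rightarrow> nat \<Rightarrow> real"

definition feasible_assign :: "nat \<Rightarrow> nat \<Rightarrow> nat \<Rightarrow> nat \<Rightarrow> assign \<Rightarrow> bool" where
  "feasible_assign N K Nmin Nmax z \<longleftrightarrow>
     (\<forall>t<N. \<forall>k<K. z t k \<in> {0, 1}) \<and>
     (\<forall>t<N. (\<Sum>k<K. z t k) = 1) \<and>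
     (\<exists>u :: nat \<Rightarrow> real. \<forall>k<K. u k \<in> {0, 1} \<and>
          real Nmin * u k \<le> (\<Sum>t<N. z t k) \<and> (\<Sum>t<N. z t k) \<le> real Nmax * u k)"

definition ra_obj :: "(nat \<Rightarrow> real^'d) \<Rightarrow> nat \<Rightarrow> nat \<Rightarrow> real \<Rightarrow> assign \<Rightarrow> (nat \<Rightarrow> real^'d)
                      \<Rightarrow> errs \<Rightarrow> errs \<Rightarrow> real" where
  "ra_obj x N K lam z c xip xim =
     (\<Sum>k<K. \<Sum>t<N. z t k * (norm (x t - c k))\<^sup>2) +
     lam * (\<Sum>t<N. \<Sum>i<K - 1. \<Sum>j\<in>{i<..<K}. z t i * xip i j t + z t j * xim i j t)"

definition centroids :: "(nat \<Rightarrow> real^'d) \<Rightarrow> nat \<Rightarrow> assign \<Rightarrow> nat \<Rightarrow> real^'d" where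
  "centroids x N z k = (1 / (\<Sum>t<N. z t k)) *\<^sub>R (\<Sum>t<N. z t k *\<^sub>R x t)"

definition cluster :: "nat \<Rightarrow> assign \<Rightarrow> nat \<Rightarrow> nat set" where
  "cluster N z k = {t. t < N \<and> z t k = 1}"

text \<open>Feasible points of the separating-hyperplane integer program for clusters Ci, Cj:
  w = wp - wm with wp, wm nonnegative integer vectors, binaries yp, ym, offset b,
  slacks xi.\<close>
definition hp_feasible :: "(nat \<Rightarrow> real^'d) \<Rightarrow> nat \<Rightarrow> nat \<Rightarrow> real \<Rightarrow> nat set \<Rightarrow> nat set
     \<Rightarrow> real^'d \<Rightarrow> real^'d \<Rightarrow> real^'d \<Rightarrow> real^'d \<Rightarrow> real \<Rightarrow> (nat \<Rightarrow> real) \<Rightarrow> bool" where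
  "hp_feasible x M \<beta> \<epsilon> Ci Cj wp wm yp ym b \<xi> \<longleftrightarrow>
     (\<forall>t\<in>Ci. (wp - wm) \<bullet> x t + b \<ge> - \<xi> t) \<and>
     (\<forall>t\<in>Cj. (wp - wm) \<bullet> x t + b + \<epsilon> \<le> \<xi> t) \<and>
     (\<forall>t\<in>Ci \<union> Cj. \<xi> t \<ge> 0) \<and>
     (\<forall>d. wp $ d \<in> \<nat> \<and> wm $ d \<in> \<nat>) \<and>
     (\<Sum>d\<in>UNIV. wp $ d + wm $ d) \<ge> 1 \<and>
     (\<forall>d. yp $ d \<in> {0, 1} \<and> ym $ d \<in> {0, 1}) \<and>
     (\<forall>d. yp $ d + ym $ d \<le> 1) \<and>
     (\<Sum>d\<in>UNIV. yp $ d + ym $ d) \<le> real \<beta> \<and>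
     (\<forall>d. 0 \<le> wp $ d \<and> wp $ d \<le> real M * yp $ d \<and>
          0 \<le> wm $ d \<and> wm $ d \<le> real M * ym $ d)"

definition hp_optimal :: "(nat \<Rightarrow> real^'d) \<Rightarrow> nat \<Rightarrow> nat \<Rightarrow> real \<Rightarrow> nat set \<Rightarrow> nat set
     \<Rightarrow> real^'d \<Rightarrow> real \<Rightarrow> bool" where
  "hp_optimal x M \<beta> \<epsilon> Ci Cj w b \<longleftrightarrow>
     (\<exists>wp wm yp ym \<xi>. w = wp - wm \<and> hp_feasible x M \<beta> \<epsilon> Ci Cj wp wm yp ym b \<xi> \<and>
        (\<forall>wp' wm' yp' ym' b' \<xi>'. hp_feasible x M \<beta> \<epsilon> Ci Cj wp' wm' yp' ym' b' \<xi>' \<longrightarrow>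
             (\<Sum>t\<in>Ci \<union> Cj. \<xi> t) \<le> (\<Sum>t\<in>Ci \<union> Cj. \<xi>' t)))"

definition hp_step :: "(nat \<Rightarrow> real^'d) \<Rightarrow> nat \<Rightarrow> nat \<Rightarrow> nat \<Rightarrow> nat \<Rightarrow> real \<Rightarrow> assign
     \<Rightarrow> errs \<Rightarrow> errs \<Rightarrow> bool" where
  "hp_step x N K M \<beta> \<epsilon> z xip xim \<longleftrightarrow>
     (\<forall>i j. i < j \<and> j < K \<longrightarrow>
        (\<exists>w b. hp_optimal x M \<beta> \<epsilon> (cluster N z i) (cluster N z j) w b \<and>
           (\<forall>t<N. xip i j t = max (- (w \<bullet> x t + b)) 0 \<and>
                  xim i j t = max (w \<bullet> x t + b + \<epsilon>) 0)))"

definition inner_step :: "(nat \<Rightarrow> real^'d) \<Rightarrow> nat \<Rightarrow> nat \<Rightarrow> nat \<Rightarrow> nat \<Rightarrow> real \<Rightarrow> errs \<Rightarrow> errs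
     \<Rightarrow> assign \<Rightarrow> (nat \<Rightarrow> real^'d) \<Rightarrow> assign \<Rightarrow> (nat \<Rightarrow> real^'d) \<Rightarrow> bool" where
  "inner_step x N K Nmin Nmax lam xip xim z c z' c' \<longleftrightarrow>
     feasible_assign N K Nmin Nmax z' \<and>
     (\<forall>z''. feasible_assign N K Nmin Nmax z'' \<longrightarrow>
        ra_obj x N K lam z' c xip xim \<le> ra_obj x N K lam z'' c xip xim) \<and>
     c' = centroids x N z'"

definition inner_loop :: "(nat \<Rightarrow> real^'d) \<Rightarrow> nat \<Rightarrow> nat \<Rightarrow> nat \<Rightarrow> nat \<Rightarrow> real \<Rightarrow> errs \<Rightarrow> errs
     \<Rightarrow> assign \<Rightarrow> (nat \<Rightarrow> real^'d) \<Rightarrow> assign \<Rightarrow> (nat \<Rightarrow> real^'d) \<Rightarrow> bool" where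
  "inner_loop x N K Nmin Nmax lam xip xim z0 c0 z1 c1 \<longleftrightarrow>
     (\<exists>n zs cs. n \<ge> 1 \<and> zs 0 = z0 \<and> cs 0 = c0 \<and> zs n = z1 \<and> cs n = c1 \<and>
        (\<forall>m<n. inner_step x N K Nmin Nmax lam xip xim (zs m) (cs m) (zs (Suc m)) (cs (Suc m))) \<and>
        (\<forall>m. Suc m < n \<longrightarrow> ra_obj x N K lam (zs (Suc m)) (cs (Suc m)) xip xim
                              \<noteq> ra_obj x N K lam (zs m) (cs m) xip xim) \<and>
        ra_obj x N K lam (zs n) (cs n) xip xim = ra_obj x N K lam (zs (n - 1)) (cs (n - 1)) xip xim)"

text \<open>A run of the initialization algorithm through outer iteration L:
  Z 0, C 0 come from (standard) k-means, all errors start at 0, and outer iteration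
  l performs (a) with the errors of iteration l - 1 and then (b).\<close>
definition outer_run_upto :: "(nat \<Rightarrow> real^'d) \<Rightarrow> nat \<Rightarrow> nat \<Rightarrow> nat \<Rightarrow> nat \<Rightarrow> nat \<Rightarrow> nat
     \<Rightarrow> real \<Rightarrow> real \<Rightarrow> nat \<Rightarrow> (nat \<Rightarrow> assign) \<Rightarrow> (nat \<Rightarrow> nat \<Rightarrow> real^'d)
     \<Rightarrow> (nat \<Rightarrow> errs) \<Rightarrow> (nat \<Rightarrow> errs) \<Rightarrow> bool" where
  "outer_run_upto x N K Nmin Nmax M \<beta> \<epsilon> lam L Z C XP XM \<longleftrightarrow>
     (\<forall>t<N. \<forall>k<K. Z 0 t k \<in> {0, 1}) \<and> (\<forall>t<N. (\<Sum>k<K. Z 0 t k) = 1) \<and>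
     C 0 = centroids x N (Z 0) \<and>
     XP 0 = (\<lambda>i j t. 0) \<and> XM 0 = (\<lambda>i j t. 0) \<and>
     (\<forall>l. 1 \<le> l \<and> l \<le> L \<longrightarrow>
        inner_loop x N K Nmin Nmax lam (XP (l - 1)) (XM (l - 1)) (Z (l - 1)) (C (l - 1)) (Z l) (C l) \<and>
        hp_step x N K M \<beta> \<epsilon> (Z l) (XP l) (XM l))"

definition outer_obj :: "(nat \<Rightarrow> real^'d) \<Rightarrow> nat \<Rightarrow> nat \<Rightarrow> real \<Rightarrow> (nat \<Rightarrow> assign)
     \<Rightarrow> (nat \<Rightarrow> nat \<Rightarrow> real^'d) \<Rightarrow> (nat \<Rightarrow> errs) \<Rightarrow> (nat \<Rightarrow> errs) \<Rightarrow> nat \<Rightarrow> real" where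
  "outer_obj x N K lam Z C XP XM l = ra_obj x N K lam (Z l) (C l) (XP (l - 1)) (XM (l - 1))"

end

theory Submission
  imports Defs
begin

lemma centroid_opt:
  fixes x :: "nat \<Rightarrow> real^'d"
  assumes z01: "\<forall>t<N. z t k \<in> {0,1::real}"
  shows "(\<Sum>t<N. z t k * (norm (x t - centroids x N z k))\<^sup>2) \<le> (\<Sum>t<N. z t k * (norm (x t - c))\<^sup>2)"
proof -
  define S where "S = (\<Sum>t<N. z t k)"
  define \<mu> where "\<mu> = centroids x N z k"
  have znn: "\<forall>t<N. 0 \<le> z t k" using z01 by auto
  show ?thesis
  proof (cases "S = 0")
    case True
    then have "\<forall>t\<in>{..<N}. z t k = 0" using znn unfolding S_def
      by (subst sum_nonneg_eq_0_iff[symmetric]) auto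
    then show ?thesis by simp
  next
    case False
    have Smu: "S *\<^sub>R \<mu> = (\<Sum>t<N. z t k *\<^sub>R x t)"
      using False unfolding \<mu>_def centroids_def S_def by simp
    have eq: "(norm (x t - c))\<^sup>2 = (norm (x t - \<mu>))\<^sup>2 + 2 * ((x t - \<mu>) \<bullet> (\<mu> - c)) + (norm (\<mu> - c))\<^sup>2" for t
    proof -
      have "x t - c = (x t - \<mu>) + (\<mu> - c)" by simp
      then show ?thesis
        using dot_norm[of "x t - \<mu>" "\<mu> - c"] by simp
    qed
    have mid: "(\<Sum>t<N. z t k * ((x t - \<mu>) \<bullet> (\<mu> - c))) = 0"
    proof -
      have "(\<Sum>t<N. z t k * ((x t - \<mu>) \<bullet> (\<mu> - c))) = (\<Sum>t<N. z t k *\<^sub>R (x t - \<mu>)) \<bullet> (\<mu> - c)"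
        by (simp add: inner_sum_left)
      also have "(\<Sum>t<N. z t k *\<^sub>R (x t - \<mu>)) = (\<Sum>t<N. z t k *\<^sub>R x t) - S *\<^sub>R \<mu>"
        unfolding S_def by (simp add: scaleR_diff_right sum_subtractf scaleR_sum_left)
      also have "\<dots> = 0" using Smu by simp
      finally show ?thesis by simp
    qed
    have "(\<Sum>t<N. z t k * (norm (x t - c))\<^sup>2) =
        (\<Sum>t<N. z t k * (norm (x t - \<mu>))\<^sup>2) + 2 * (\<Sum>t<N. z t k * ((x t - \<mu>) \<bullet> (\<mu> - c))) + S * (norm (\<mu> - c))\<^sup>2"
    proof -
      have "(\<Sum>t<N. z t k * (norm (x t - c))\<^sup>2) = (\<Sum>t<N. z t k * (norm (x t - \<mu>))\<^sup>2 + 2 * (z t k * ((x t - \<mu>) \<bullet> (\<mu> - c))) + z t k * (norm (\<mu> - c))\<^sup>2)"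
        by (rule sum.cong) (simp_all add: eq distrib_left)
      also have "\<dots> = (\<Sum>t<N. z t k * (norm (x t - \<mu>))\<^sup>2) + 2 * (\<Sum>t<N. z t k * ((x t - \<mu>) \<bullet> (\<mu> - c))) + (\<Sum>t<N. z t k) * (norm (\<mu> - c))\<^sup>2"
        by (simp add: sum.distrib sum_distrib_left sum_distrib_right)
      finally show ?thesis unfolding S_def .
    qed
    also have "\<dots> = (\<Sum>t<N. z t k * (norm (x t - \<mu>))\<^sup>2) + S * (norm (\<mu> - c))\<^sup>2" using mid by simp
    also have "\<dots> \<ge> (\<Sum>t<N. z t k * (norm (x t - \<mu>))\<^sup>2)"
    proof -
      have "0 \<le> S" unfolding S_def using znn by (intro sum_nonneg) auto
      then show ?thesis by simp
    qed
    finally show ?thesis unfolding \<mu>_def by simp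
  qed
qed

definition kmv :: "(nat \<Rightarrow> real^'d) \<Rightarrow> nat \<Rightarrow> nat \<Rightarrow> assign \<Rightarrow> (nat \<Rightarrow> real^'d) \<Rightarrow> real" where
  "kmv x N K z c = (\<Sum>k<K. \<Sum>t<N. z t k * (norm (x t - c k))\<^sup>2)"

definition xtv :: "nat \<Rightarrow> nat \<Rightarrow> assign \<Rightarrow> errs \<Rightarrow> errs \<Rightarrow> real" where
  "xtv N K z xip xim = (\<Sum>t<N. \<Sum>i<K - 1. \<Sum>j\<in>{i<..<K}. z t i * xip i j t + z t j * xim i j t)"

lemma ra_split: "ra_obj x N K lam z c xip xim = kmv x N K z c + lam * xtv N K z xip xim"
  by (simp add: ra_obj_def kmv_def xtv_def)

lemma kmv_cong:
  assumes "\<forall>t<N. \<forall>k<K. z t k = z' t k" "\<forall>k<K. c k = c' k"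
  shows "kmv x N K z c = kmv x N K z' c'"
  unfolding kmv_def using assms by (intro sum.cong refl) auto

lemma xtv_cong:
  assumes "\<forall>t<N. \<forall>k<K. z t k = z' t k"
  shows "xtv N K z xip xim = xtv N K z' xip xim"
  unfolding xtv_def using assms by (intro sum.cong refl) auto

lemma centroids_cong:
  assumes "\<forall>t<N. z t k = z' t k"
  shows "centroids x N z k = centroids x N z' k"
proof -
  have "(\<Sum>t<N. z t k) = (\<Sum>t<N. z' t k)" "(\<Sum>t<N. z t k *\<^sub>R x t) = (\<Sum>t<N. z' t k *\<^sub>R x t)"
    using assms by (auto intro!: sum.cong)
  then show ?thesis unfolding centroids_def by simp
qed

lemma kmv_centroids_le:
  assumes "\<forall>t<N. \<forall>k<K. z t k \<in> {0,1::real}"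
  shows "kmv x N K z (centroids x N z) \<le> kmv x N K z c"
  unfolding kmv_def using assms by (intro sum_mono centroid_opt) auto

lemma inner_step_mono:
  assumes "feasible_assign N K Nmin Nmax z"
    and "inner_step x N K Nmin Nmax lam xip xim z c z' c'"
  shows "ra_obj x N K lam z' c' xip xim \<le> ra_obj x N K lam z c xip xim"
proof -
  have f': "feasible_assign N K Nmin Nmax z'" and opt: "ra_obj x N K lam z' c xip xim \<le> ra_obj x N K lam z c xip xim"
    and c': "c' = centroids x N z'"
    using assms unfolding inner_step_def by auto
  have "kmv x N K z' c' \<le> kmv x N K z' c"
    using f' c' kmv_centroids_le unfolding feasible_assign_def by blast
  then have "ra_obj x N K lam z' c' xip xim \<le> ra_obj x N K lam z' c xip xim"
    by (simp add: ra_split)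
  then show ?thesis using opt by linarith
qed

lemma inner_loop_out:
  assumes "inner_loop x N K Nmin Nmax lam xip xim z0 c0 z1 c1"
  shows "feasible_assign N K Nmin Nmax z1 \<and> c1 = centroids x N z1"
proof -
  obtain n zs cs where h: "n \<ge> 1" "zs n = z1" "cs n = c1"
    "\<forall>m<n. inner_step x N K Nmin Nmax lam xip xim (zs m) (cs m) (zs (Suc m)) (cs (Suc m))"
    using assms unfolding inner_loop_def by blast
  have "inner_step x N K Nmin Nmax lam xip xim (zs (n-1)) (cs (n-1)) (zs n) (cs n)"
    using h(1,4) by (metis Suc_diff_1 diff_less less_numeral_extra(1) order_less_le_trans)
  then show ?thesis using h unfolding inner_step_def by auto
qed

lemma inner_loop_mono:
  assumes "feasible_assign N K Nmin Nmax z0"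
    and "inner_loop x N K Nmin Nmax lam xip xim z0 c0 z1 c1"
  shows "ra_obj x N K lam z1 c1 xip xim \<le> ra_obj x N K lam z0 c0 xip xim"
proof -
  obtain n zs cs where h: "n \<ge> 1" "zs 0 = z0" "cs 0 = c0" "zs n = z1" "cs n = c1"
    "\<forall>m<n. inner_step x N K Nmin Nmax lam xip xim (zs m) (cs m) (zs (Suc m)) (cs (Suc m))"
    using assms(2) unfolding inner_loop_def by blast
  have "m \<le> n \<longrightarrow> feasible_assign N K Nmin Nmax (zs m) \<and>
      ra_obj x N K lam (zs m) (cs m) xip xim \<le> ra_obj x N K lam z0 c0 xip xim" for m
  proof (induction m)
    case 0
    then show ?case using h assms(1) by simp
  next
    case (Suc m)
    show ?case
    proof
      assume "Suc m \<le> n"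
      then have st: "inner_step x N K Nmin Nmax lam xip xim (zs m) (cs m) (zs (Suc m)) (cs (Suc m))"
        using h(6) by simp
      have IH: "feasible_assign N K Nmin Nmax (zs m)"
        "ra_obj x N K lam (zs m) (cs m) xip xim \<le> ra_obj x N K lam z0 c0 xip xim"
        using Suc \<open>Suc m \<le> n\<close> by auto
      show "feasible_assign N K Nmin Nmax (zs (Suc m)) \<and>
          ra_obj x N K lam (zs (Suc m)) (cs (Suc m)) xip xim \<le> ra_obj x N K lam z0 c0 xip xim"
        using st IH inner_step_mono[OF IH(1) st] unfolding inner_step_def by auto
    qed
  qed
  then show ?thesis using h by auto
qed

lemma hp_pair:
  fixes x :: "nat \<Rightarrow> real^'d"
  assumes disj: "Ci \<inter> Cj = {}" and fin: "finite Ci" "finite Cj"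
    and o1: "hp_optimal x M \<beta> \<epsilon> Ci Cj w b"
    and o2: "hp_optimal x M \<beta> \<epsilon> Ci' Cj' w' b'"
  shows "(\<Sum>t\<in>Ci. max (- (w \<bullet> x t + b)) 0) + (\<Sum>t\<in>Cj. max (w \<bullet> x t + b + \<epsilon>) 0)
    \<le> (\<Sum>t\<in>Ci. max (- (w' \<bullet> x t + b')) 0) + (\<Sum>t\<in>Cj. max (w' \<bullet> x t + b' + \<epsilon>) 0)"
proof -
  obtain wp wm yp ym \<xi> where w: "w = wp - wm" and feas: "hp_feasible x M \<beta> \<epsilon> Ci Cj wp wm yp ym b \<xi>"
    and opt: "\<And>wp' wm' yp' ym' b' \<xi>'. hp_feasible x M \<beta> \<epsilon> Ci Cj wp' wm' yp' ym' b' \<xi>' \<Longrightarrow>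
             (\<Sum>t\<in>Ci \<union> Cj. \<xi> t) \<le> (\<Sum>t\<in>Ci \<union> Cj. \<xi>' t)"
    using o1 unfolding hp_optimal_def by blast
  obtain wp' wm' yp' ym' \<xi>' where w': "w' = wp' - wm'" and feas': "hp_feasible x M \<beta> \<epsilon> Ci' Cj' wp' wm' yp' ym' b' \<xi>'"
    using o2 unfolding hp_optimal_def by blast
  define \<xi>'' where "\<xi>'' t = (if t \<in> Ci then max (- (w' \<bullet> x t + b')) 0 else max (w' \<bullet> x t + b' + \<epsilon>) 0)" for t
  have "hp_feasible x M \<beta> \<epsilon> Ci Cj wp' wm' yp' ym' b' \<xi>''"
    using feas' disj unfolding hp_feasible_def \<xi>''_def w' by auto
  then have A: "(\<Sum>t\<in>Ci \<union> Cj. \<xi> t) \<le> (\<Sum>t\<in>Ci \<union> Cj. \<xi>'' t)" by (rule opt)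
  have B: "(\<Sum>t\<in>Ci \<union> Cj. \<xi>'' t) = (\<Sum>t\<in>Ci. max (- (w' \<bullet> x t + b')) 0) + (\<Sum>t\<in>Cj. max (w' \<bullet> x t + b' + \<epsilon>) 0)"
  proof -
    have "(\<Sum>t\<in>Ci \<union> Cj. \<xi>'' t) = (\<Sum>t\<in>Ci. \<xi>'' t) + (\<Sum>t\<in>Cj. \<xi>'' t)"
      using fin disj by (simp add: sum.union_disjoint)
    also have "(\<Sum>t\<in>Cj. \<xi>'' t) = (\<Sum>t\<in>Cj. max (w' \<bullet> x t + b' + \<epsilon>) 0)"
      using disj unfolding \<xi>''_def by (intro sum.cong) auto
    also have "(\<Sum>t\<in>Ci. \<xi>'' t) = (\<Sum>t\<in>Ci. max (- (w' \<bullet> x t + b')) 0)"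
      unfolding \<xi>''_def by (intro sum.cong) auto
    finally show ?thesis .
  qed
  have C: "(\<Sum>t\<in>Ci. max (- (w \<bullet> x t + b)) 0) + (\<Sum>t\<in>Cj. max (w \<bullet> x t + b + \<epsilon>) 0) \<le> (\<Sum>t\<in>Ci \<union> Cj. \<xi> t)"
  proof -
    have "(\<Sum>t\<in>Ci. max (- (w \<bullet> x t + b)) 0) \<le> (\<Sum>t\<in>Ci. \<xi> t)"
      using feas unfolding hp_feasible_def w by (intro sum_mono) auto
    moreover have "(\<Sum>t\<in>Cj. max (w \<bullet> x t + b + \<epsilon>) 0) \<le> (\<Sum>t\<in>Cj. \<xi> t)"
      using feas unfolding hp_feasible_def w by (intro sum_mono) auto
    ultimately show ?thesis using fin disj by (simp add: sum.union_disjoint)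
  qed
  show ?thesis using A B C by linarith
qed

lemma sum_binary_cluster:
  assumes "\<forall>t<N. z t i \<in> {0,1::real}"
  shows "(\<Sum>t<N. z t i * a t) = (\<Sum>t\<in>cluster N z i. a t)"
proof -
  have "cluster N z i = {t\<in>{..<N}. z t i = 1}" unfolding cluster_def by auto
  then have "(\<Sum>t\<in>cluster N z i. a t) = (\<Sum>t<N. if z t i = 1 then a t else 0)"
    by (simp only: sum.inter_filter[OF finite_lessThan])
  also have "\<dots> = (\<Sum>t<N. z t i * a t)" using assms by (intro sum.cong) auto
  finally show ?thesis by simp
qed

lemma xtv_cluster:
  assumes "\<forall>t<N. \<forall>k<K. z t k \<in> {0,1::real}"
  shows "xtv N K z xip xim = (\<Sum>i<K - 1. \<Sum>j\<in>{i<..<K}.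
     (\<Sum>t\<in>cluster N z i. xip i j t) + (\<Sum>t\<in>cluster N z j. xim i j t))"
proof -
  have "xtv N K z xip xim = (\<Sum>i<K - 1. \<Sum>j\<in>{i<..<K}. \<Sum>t<N. z t i * xip i j t + z t j * xim i j t)"
    unfolding xtv_def by (simp add: sum.swap[of _ "{..<N}"])
  also have "\<dots> = (\<Sum>i<K - 1. \<Sum>j\<in>{i<..<K}.
     (\<Sum>t\<in>cluster N z i. xip i j t) + (\<Sum>t\<in>cluster N z j. xim i j t))"
  proof (intro sum.cong refl)
    fix i j assume "i \<in> {..<K - 1}" "j \<in> {i<..<K}"
    then have "i < K" "j < K" by auto
    then show "(\<Sum>t<N. z t i * xip i j t + z t j * xim i j t) =
      (\<Sum>t\<in>cluster N z i. xip i j t) + (\<Sum>t\<in>cluster N z j. xim i j t)"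
      using assms by (simp add: sum.distrib sum_binary_cluster)
  qed
  finally show ?thesis .
qed

lemma cluster_disj:
  assumes "feasible_assign N K Nmin Nmax z" "i < K" "j < K" "i \<noteq> j"
  shows "cluster N z i \<inter> cluster N z j = {}"
proof (rule ccontr)
  assume "cluster N z i \<inter> cluster N z j \<noteq> {}"
  then obtain t where t: "t < N" "z t i = 1" "z t j = 1" unfolding cluster_def by auto
  have b01: "\<forall>k<K. z t k \<in> {0,1}" and s1: "(\<Sum>k<K. z t k) = 1"
    using assms(1) t(1) unfolding feasible_assign_def by blast+
  have nn: "\<forall>k<K. 0 \<le> z t k" using b01 by auto
  have "(\<Sum>k\<in>{i,j}. z t k) \<le> (\<Sum>k<K. z t k)"
    using nn assms(2,3) by (intro sum_mono2) auto
  then show False using t s1 assms(4) by simp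
qed

lemma xtv_opt:
  fixes x :: "nat \<Rightarrow> real^'d"
  assumes fz: "feasible_assign N K Nmin Nmax z"
    and h1: "hp_step x N K M \<beta> \<epsilon> z xip xim"
    and h2: "hp_step x N K M \<beta> \<epsilon> z' xip' xim'"
  shows "xtv N K z xip xim \<le> xtv N K z xip' xim'"
proof -
  have bin: "\<forall>t<N. \<forall>k<K. z t k \<in> {0,1::real}" using fz unfolding feasible_assign_def by auto
  show ?thesis unfolding xtv_cluster[OF bin]
  proof (intro sum_mono)
    fix i j assume "i \<in> {..<K - 1}" "j \<in> {i<..<K}"
    then have ij: "i < j" "j < K" by auto
    obtain w b where o1: "hp_optimal x M \<beta> \<epsilon> (cluster N z i) (cluster N z j) w b"
      and e1: "\<forall>t<N. xip i j t = max (- (w \<bullet> x t + b)) 0 \<and> xim i j t = max (w \<bullet> x t + b + \<epsilon>) 0"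
      using h1 ij unfolding hp_step_def by blast
    obtain w' b' where o2: "hp_optimal x M \<beta> \<epsilon> (cluster N z' i) (cluster N z' j) w' b'"
      and e2: "\<forall>t<N. xip' i j t = max (- (w' \<bullet> x t + b')) 0 \<and> xim' i j t = max (w' \<bullet> x t + b' + \<epsilon>) 0"
      using h2 ij unfolding hp_step_def by blast
    have sub: "cluster N z k \<subseteq> {..<N}" for k unfolding cluster_def by auto
    have fin: "finite (cluster N z k)" for k using sub finite_subset by blast
    have d: "cluster N z i \<inter> cluster N z j = {}" using cluster_disj[OF fz] ij by auto
    have eq1: "(\<Sum>t\<in>cluster N z i. xip i j t) + (\<Sum>t\<in>cluster N z j. xim i j t) =
      (\<Sum>t\<in>cluster N z i. max (- (w \<bullet> x t + b)) 0) + (\<Sum>t\<in>cluster N z j. max (w \<bullet> x t + b + \<epsilon>) 0)"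
      using e1 sub by (intro arg_cong2[where f="(+)"] sum.cong) auto
    have eq2: "(\<Sum>t\<in>cluster N z i. xip' i j t) + (\<Sum>t\<in>cluster N z j. xim' i j t) =
      (\<Sum>t\<in>cluster N z i. max (- (w' \<bullet> x t + b')) 0) + (\<Sum>t\<in>cluster N z j. max (w' \<bullet> x t + b' + \<epsilon>) 0)"
      using e2 sub by (intro arg_cong2[where f="(+)"] sum.cong) auto
    show "(\<Sum>t\<in>cluster N z i. xip i j t) + (\<Sum>t\<in>cluster N z j. xim i j t)
        \<le> (\<Sum>t\<in>cluster N z i. xip' i j t) + (\<Sum>t\<in>cluster N z j. xim' i j t)"
      unfolding eq1 eq2 by (rule hp_pair[OF d fin fin o1 o2])
  qed
qed

lemma finite_range_factor:
  assumes "finite (range h)" "\<forall>a b. h a = h b \<longrightarrow> f a = f b"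
  shows "finite (range f)"
proof -
  have "range f \<subseteq> (\<lambda>y. f (SOME a. h a = y)) ` range h"
  proof
    fix v assume "v \<in> range f"
    then obtain a where a: "v = f a" by auto
    have "h (SOME a'. h a' = h a) = h a" by (rule someI) (rule refl)
    then have "f (SOME a'. h a' = h a) = f a" using assms(2) by blast
    then show "v \<in> (\<lambda>y. f (SOME a. h a = y)) ` range h" using a by (intro image_eqI[where x="h a"]) auto
  qed
  then show ?thesis using assms(1) finite_subset by blast
qed

lemma min_stable:
  fixes f :: "nat \<Rightarrow> real"
  assumes "finite (range f)" "\<And>m. f (Suc m) \<le> f m"
  shows "\<exists>m. \<forall>k\<ge>m. f k = f m"
proof -
  have "Min (range f) \<in> range f" using assms(1) by (intro Min_in) auto
  then obtain m where m: "f m = Min (range f)" by auto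
  have "\<forall>k\<ge>m. f k = f m"
  proof (intro allI impI)
    fix k assume "m \<le> k"
    then have "f k \<le> f m" using assms(2) by (rule lift_Suc_antimono_le[rotated])
    moreover have "Min (range f) \<le> f k" using assms(1) by (intro Min_le) auto
    ultimately show "f k = f m" using m by linarith
  qed
  then show ?thesis by blast
qed

definition boxset :: "nat \<Rightarrow> nat \<Rightarrow> assign \<Rightarrow> (nat \<times> nat) set" where
  "boxset N K z = {(t, k). t < N \<and> k < K \<and> z t k = 1}"

lemma boxset_finite_range: "finite (range (\<lambda>m. boxset N K (zs m)))"
proof -
  have "range (\<lambda>m. boxset N K (zs m)) \<subseteq> Pow ({..<N} \<times> {..<K})"
    unfolding boxset_def by auto
  then show ?thesis by (rule finite_subset) auto
qed

lemma boxset_eq: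
  assumes "feasible_assign N K Nmin Nmax z" "feasible_assign N K Nmin' Nmax' z'"
    "boxset N K z = boxset N K z'"
  shows "\<forall>t<N. \<forall>k<K. z t k = z' t k"
proof (intro allI impI)
  fix t k assume tk: "t < N" "k < K"
  have b: "z t k \<in> {0,1}" "z' t k \<in> {0,1}" using assms(1,2) tk unfolding feasible_assign_def by blast+
  have i1: "(z t k = 1) = ((t, k) \<in> boxset N K z)" and i2: "(z' t k = 1) = ((t, k) \<in> boxset N K z')"
    using tk by (simp_all add: boxset_def)
  have "(z t k = 1) = (z' t k = 1)" unfolding i1 i2 assms(3) ..
  then show "z t k = z' t k" using b by auto
qed

lemma run_facts:
  assumes "outer_run_upto x N K Nmin Nmax M \<beta> \<epsilon> lam L Z C XP XM" "1 \<le> l" "l \<le> L"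
  shows "feasible_assign N K Nmin Nmax (Z l) \<and> C l = centroids x N (Z l) \<and> hp_step x N K M \<beta> \<epsilon> (Z l) (XP l) (XM l)"
  using assms inner_loop_out unfolding outer_run_upto_def by blast

lemma sand1:
  assumes run: "outer_run_upto x N K Nmin Nmax M \<beta> \<epsilon> lam L Z C XP XM" and l: "1 \<le> l" "Suc l \<le> L"
    and lam: "lam \<ge> 0"
  shows "ra_obj x N K lam (Z (Suc l)) (C (Suc l)) (XP (Suc l)) (XM (Suc l)) \<le> outer_obj x N K lam Z C XP XM (Suc l)"
proof -
  have a: "feasible_assign N K Nmin Nmax (Z (Suc l))" "hp_step x N K M \<beta> \<epsilon> (Z (Suc l)) (XP (Suc l)) (XM (Suc l))"
    using run_facts[OF run _ l(2)] by auto
  have b: "hp_step x N K M \<beta> \<epsilon> (Z l) (XP l) (XM l)" using run_facts[OF run l(1)] l by auto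
  have "xtv N K (Z (Suc l)) (XP (Suc l)) (XM (Suc l)) \<le> xtv N K (Z (Suc l)) (XP l) (XM l)"
    by (rule xtv_opt[OF a b])
  then show ?thesis unfolding outer_obj_def ra_split using lam by (simp add: mult_left_mono)
qed

lemma sand2:
  assumes run: "outer_run_upto x N K Nmin Nmax M \<beta> \<epsilon> lam L Z C XP XM" and l: "1 \<le> l" "Suc l \<le> L"
  shows "outer_obj x N K lam Z C XP XM (Suc l) \<le> ra_obj x N K lam (Z l) (C l) (XP l) (XM l)"
proof -
  have f: "feasible_assign N K Nmin Nmax (Z l)" using run_facts[OF run l(1)] l by auto
  have "inner_loop x N K Nmin Nmax lam (XP l) (XM l) (Z l) (C l) (Z (Suc l)) (C (Suc l))"
    using run l unfolding outer_run_upto_def by (metis diff_Suc_1 le_add1 plus_1_eq_Suc)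
  from inner_loop_mono[OF f this] show ?thesis unfolding outer_obj_def by simp
qed

theorem theorem2:
  fixes x :: "nat \<Rightarrow> real^'d"
    and N K Nmin Nmax M \<beta> :: nat
    and \<epsilon> lam :: real
  assumes "M > 1" and "\<epsilon> > 0" and "lam \<ge> 0"
  shows
    "(\<forall>L Z C XP XM. outer_run_upto x N K Nmin Nmax M \<beta> \<epsilon> lam L Z C XP XM \<longrightarrow>
        (\<forall>l. 2 \<le> l \<and> l < L \<longrightarrow>
           outer_obj x N K lam Z C XP XM (Suc l) \<le> outer_obj x N K lam Z C XP XM l))
     \<and>
     (\<forall>xip xim zs cs.
        (\<forall>m. inner_step x N K Nmin Nmax lam xip xim (zs m) (cs m) (zs (Suc m)) (cs (Suc m))) \<longrightarrow>
        (\<exists>m. ra_obj x N K lam (zs (Suc m)) (cs (Suc m)) xip xim = ra_obj x N K lam (zs m) (cs m) xip xim))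
     \<and>
     (\<forall>Z C XP XM. (\<forall>L. outer_run_upto x N K Nmin Nmax M \<beta> \<epsilon> lam L Z C XP XM) \<longrightarrow>
        (\<exists>l\<ge>1. outer_obj x N K lam Z C XP XM (Suc l) = outer_obj x N K lam Z C XP XM l))"
proof (intro conjI allI impI)
  fix L Z C XP XM l
  assume run: "outer_run_upto x N K Nmin Nmax M \<beta> \<epsilon> lam L Z C XP XM" and l: "2 \<le> l \<and> l < L"
  have "outer_obj x N K lam Z C XP XM (Suc l) \<le> ra_obj x N K lam (Z l) (C l) (XP l) (XM l)"
    using sand2[OF run] l by auto
  also have "\<dots> \<le> outer_obj x N K lam Z C XP XM (Suc (l - 1))"
    using sand1[OF run _ _ assms(3), of "l - 1"] l by auto
  finally show "outer_obj x N K lam Z C XP XM (Suc l) \<le> outer_obj x N K lam Z C XP XM l"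
    using l by simp
next
  fix xip xim zs cs
  assume st: "\<forall>m. inner_step x N K Nmin Nmax lam xip xim (zs m) (cs m) (zs (Suc m)) (cs (Suc m))"
  have fz: "feasible_assign N K Nmin Nmax (zs (Suc m))" and cz: "cs (Suc m) = centroids x N (zs (Suc m))" for m
    using st unfolding inner_step_def by auto
  define f where "f m = ra_obj x N K lam (zs (Suc m)) (cs (Suc m)) xip xim" for m
  have mono: "f (Suc m) \<le> f m" for m unfolding f_def using inner_step_mono[OF fz st[rule_format]] .
  have "finite (range f)"
  proof (rule finite_range_factor[OF boxset_finite_range[of N K "\<lambda>m. zs (Suc m)"]], intro allI impI)
    fix a b assume "boxset N K (zs (Suc a)) = boxset N K (zs (Suc b))"
    then have e: "\<forall>t<N. \<forall>k<K. zs (Suc a) t k = zs (Suc b) t k" using boxset_eq fz by blast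
    have "\<forall>k<K. cs (Suc a) k = cs (Suc b) k" using e cz centroids_cong by metis
    then show "f a = f b" unfolding f_def ra_split
      using kmv_cong[OF e] xtv_cong[OF e] by simp
  qed
  then obtain m where mm: "\<forall>k\<ge>m. f k = f m" using min_stable mono by blast
  have "f (Suc m) = f m" using mm[rule_format, of "Suc m"] by linarith
  then show "\<exists>m. ra_obj x N K lam (zs (Suc m)) (cs (Suc m)) xip xim = ra_obj x N K lam (zs m) (cs m) xip xim"
    unfolding f_def by blast
next
  fix Z C XP XM
  assume runs: "\<forall>L. outer_run_upto x N K Nmin Nmax M \<beta> \<epsilon> lam L Z C XP XM"
  have rf: "feasible_assign N K Nmin Nmax (Z l) \<and> C l = centroids x N (Z l) \<and> hp_step x N K M \<beta> \<epsilon> (Z l) (XP l) (XM l)"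
    if "1 \<le> l" for l using run_facts[OF runs[rule_format, of l] that] by simp
  define g where "g l = ra_obj x N K lam (Z (Suc (Suc l))) (C (Suc (Suc l))) (XP (Suc (Suc l))) (XM (Suc (Suc l)))" for l
  have s1: "g l \<le> outer_obj x N K lam Z C XP XM (Suc (Suc l))" for l
    unfolding g_def using sand1[OF runs[rule_format, of "Suc (Suc l)"] _ _ assms(3), of "Suc l"] by simp
  have s2: "outer_obj x N K lam Z C XP XM (Suc (Suc (Suc l))) \<le> g l" for l
    unfolding g_def using sand2[OF runs[rule_format, of "Suc (Suc (Suc l))"], of "Suc (Suc l)"] by simp
  have mono: "g (Suc l) \<le> g l" for l using s1[of "Suc l"] s2[of l] by simp
  have "finite (range g)"
  proof (rule finite_range_factor[OF boxset_finite_range[of N K "\<lambda>m. Z (Suc (Suc m))"]], intro allI impI)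
    fix a b assume "boxset N K (Z (Suc (Suc a))) = boxset N K (Z (Suc (Suc b)))"
    moreover have fa: "feasible_assign N K Nmin Nmax (Z (Suc (Suc a)))" "C (Suc (Suc a)) = centroids x N (Z (Suc (Suc a)))"
        "hp_step x N K M \<beta> \<epsilon> (Z (Suc (Suc a))) (XP (Suc (Suc a))) (XM (Suc (Suc a)))"
      using rf[of "Suc (Suc a)"] by auto
    moreover have fb: "feasible_assign N K Nmin Nmax (Z (Suc (Suc b)))" "C (Suc (Suc b)) = centroids x N (Z (Suc (Suc b)))"
        "hp_step x N K M \<beta> \<epsilon> (Z (Suc (Suc b))) (XP (Suc (Suc b))) (XM (Suc (Suc b)))"
      using rf[of "Suc (Suc b)"] by auto
    ultimately have e: "\<forall>t<N. \<forall>k<K. Z (Suc (Suc a)) t k = Z (Suc (Suc b)) t k" using boxset_eq by blast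
    have e': "\<forall>t<N. \<forall>k<K. Z (Suc (Suc b)) t k = Z (Suc (Suc a)) t k" using e by simp
    have "\<forall>k<K. C (Suc (Suc a)) k = C (Suc (Suc b)) k" using e fa(2) fb(2) centroids_cong by metis
    then have km: "kmv x N K (Z (Suc (Suc a))) (C (Suc (Suc a))) = kmv x N K (Z (Suc (Suc b))) (C (Suc (Suc b)))"
      using kmv_cong[OF e] by blast
    have x1: "xtv N K (Z (Suc (Suc a))) (XP (Suc (Suc a))) (XM (Suc (Suc a))) \<le> xtv N K (Z (Suc (Suc b))) (XP (Suc (Suc b))) (XM (Suc (Suc b)))"
      using xtv_opt[OF fa(1) fa(3) fb(3)] xtv_cong[OF e] by simp
    have x2: "xtv N K (Z (Suc (Suc b))) (XP (Suc (Suc b))) (XM (Suc (Suc b))) \<le> xtv N K (Z (Suc (Suc a))) (XP (Suc (Suc a))) (XM (Suc (Suc a)))"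
      using xtv_opt[OF fb(1) fb(3) fa(3)] xtv_cong[OF e'] by simp
    show "g a = g b" unfolding g_def ra_split using km x1 x2 by simp
  qed
  then obtain m where m: "\<forall>k\<ge>m. g k = g m" using min_stable mono by blast
  have g1: "g (Suc m) = g m" and g2: "g (Suc (Suc m)) = g m"
    using m[rule_format, of "Suc m"] m[rule_format, of "Suc (Suc m)"] by linarith+
  have "outer_obj x N K lam Z C XP XM (Suc (Suc (Suc m))) = g m"
    using s1[of "Suc m"] s2[of m] g1 by linarith
  moreover have "outer_obj x N K lam Z C XP XM (Suc (Suc (Suc (Suc m)))) = g m"
    using s1[of "Suc (Suc m)"] s2[of "Suc m"] g1 g2 by linarith
  ultimately have eqf: "outer_obj x N K lam Z C XP XM (Suc (Suc (Suc (Suc m)))) = outer_obj x N K lam Z C XP XM (Suc (Suc (Suc m)))"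
    by (simp only:)
  have one: "(1::nat) \<le> Suc (Suc (Suc m))" by simp
  show "\<exists>l\<ge>1. outer_obj x N K lam Z C XP XM (Suc l) = outer_obj x N K lam Z C XP XM l"
    by (rule exI[of _ "Suc (Suc (Suc m))"], rule conjI[OF one eqf])
qed

end
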